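(* Let $W$ be a group admitting an odd connected Coxeter system $(W,S)$ of rank $n\geq 3$ whose graph $\mathcal V_{(W,S)}$ is a tree. Then the restriction map $\operatorname{Aut}(W)\to\operatorname{Aut}(W')$, $\phi\mapsto\phi|_{W'}$, is injective, where $W'$ is the commutator subgroup of $W$.
   Context: A Coxeter system $(W,S)$ with $S=\{w_1,\dots,w_n\}$ means that $W$ has the presentation $\langle w_1,\dots,w_n \mid (w_iw_j)^{m_{ij}}=1\rangle$, where $m_{ii}=1$ and $m_{ij}=m_{ji}\in\{2,3,4,\dots\}\cup\{\infty\}$ for $i\neq j$ (no relation is imposed when $m_{ij}=\infty$). The numbers $m_{ij}$, $i\neq j$, are the exponents and $n$ is the rank. The system is odd if every exponent is odd or $\infty$. The graph $\mathcal V_{(W,S)}$ has vertex set $\{1,\dots,n\}$ and an edge between $i\neq j$ iff $m_{ij}<\infty$; the system is connected if $\mathcal V_{(W,S)}$ is connected. The commutator subgroup $W'$ is characteristic, so each automorphism of $W$ restricts to an automorphism of $W'$. *)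

theory Defs
  imports "HOL-Algebra.Algebra" "HOL-Library.Extended_Nat"
begin

text \<open>Words in abstract generators: a letter (i, b) stands for the generator x_i if b = False
  and for its inverse if b = True.\<close>

type_synonym word = "(nat \<times> bool) list"

definition inv_letter :: "nat \<times> bool \<Rightarrow> nat \<times> bool" where
  "inv_letter l = (fst l, \<not> snd l)"

fun eval_word :: "('g, 'b) monoid_scheme \<Rightarrow> (nat \<Rightarrow> 'g) \<Rightarrow> word \<Rightarrow> 'g" where
  "eval_word G x [] = \<one>\<^bsub>G\<^esub>"
| "eval_word G x ((i, b) # w) =
     (if b then inv\<^bsub>G\<^esub> (x i) else x i) \<otimes>\<^bsub>G\<^esub> eval_word G x w"

text \<open>Equality in the group presented by generators x_0..x_{n-1} and relators R:
  the congruence on words generated by free cancellation and insertion of relators.\<close>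
inductive pres_eq :: "nat \<Rightarrow> word set \<Rightarrow> word \<Rightarrow> word \<Rightarrow> bool" for n R where
  refl: "pres_eq n R w w"
| sym: "pres_eq n R u v \<Longrightarrow> pres_eq n R v u"
| trans: "pres_eq n R u v \<Longrightarrow> pres_eq n R v w \<Longrightarrow> pres_eq n R u w"
| cancel: "fst l < n \<Longrightarrow> pres_eq n R (u @ v) (u @ [l, inv_letter l] @ v)"
| relator: "r \<in> R \<Longrightarrow> pres_eq n R (u @ v) (u @ r @ v)"

definition word_over :: "nat \<Rightarrow> word \<Rightarrow> bool" where
  "word_over n w \<longleftrightarrow> (\<forall>l \<in> set w. fst l < n)"

definition has_presentation ::
    "('g, 'b) monoid_scheme \<Rightarrow> nat \<Rightarrow> (nat \<Rightarrow> 'g) \<Rightarrow> word set \<Rightarrow> bool" where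
  "has_presentation G n x R \<longleftrightarrow>
     group G \<and> (\<forall>i < n. x i \<in> carrier G) \<and>
     generate G (x ` {..<n}) = carrier G \<and>
     (\<forall>w. word_over n w \<longrightarrow> (eval_word G x w = \<one>\<^bsub>G\<^esub> \<longleftrightarrow> pres_eq n R w []))"

definition coxeter_matrix :: "nat \<Rightarrow> (nat \<Rightarrow> nat \<Rightarrow> enat) \<Rightarrow> bool" where
  "coxeter_matrix n m \<longleftrightarrow>
     (\<forall>i < n. m i i = 1) \<and>
     (\<forall>i < n. \<forall>j < n. m i j = m j i) \<and>
     (\<forall>i < n. \<forall>j < n. i \<noteq> j \<longrightarrow> m i j \<ge> 2)"

definition coxeter_relators :: "nat \<Rightarrow> (nat \<Rightarrow> nat \<Rightarrow> enat) \<Rightarrow> word set" where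
  "coxeter_relators n m =
     {concat (replicate k [(i, False), (j, False)]) | i j k.
        i < n \<and> j < n \<and> m i j = enat k}"

definition coxeter_system ::
    "('g, 'b) monoid_scheme \<Rightarrow> nat \<Rightarrow> (nat \<Rightarrow> 'g) \<Rightarrow> (nat \<Rightarrow> nat \<Rightarrow> enat) \<Rightarrow> bool" where
  "coxeter_system W n w m \<longleftrightarrow>
     coxeter_matrix n m \<and> has_presentation W n w (coxeter_relators n m)"

definition odd_coxeter :: "nat \<Rightarrow> (nat \<Rightarrow> nat \<Rightarrow> enat) \<Rightarrow> bool" where
  "odd_coxeter n m \<longleftrightarrow>
     (\<forall>i < n. \<forall>j < n. i \<noteq> j \<longrightarrow> m i j = \<infinity> \<or> (\<exists>k. m i j = enat k \<and> odd k))"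

definition cox_adj :: "nat \<Rightarrow> (nat \<Rightarrow> nat \<Rightarrow> enat) \<Rightarrow> nat \<Rightarrow> nat \<Rightarrow> bool" where
  "cox_adj n m i j \<longleftrightarrow> i < n \<and> j < n \<and> i \<noteq> j \<and> m i j < \<infinity>"

definition graph_connected :: "nat \<Rightarrow> (nat \<Rightarrow> nat \<Rightarrow> bool) \<Rightarrow> bool" where
  "graph_connected n E \<longleftrightarrow> (\<forall>i < n. \<forall>j < n. (i, j) \<in> {(a, b). E a b}\<^sup>*)"

definition graph_has_cycle :: "nat \<Rightarrow> (nat \<Rightarrow> nat \<Rightarrow> bool) \<Rightarrow> bool" where
  "graph_has_cycle n E \<longleftrightarrow>
     (\<exists>vs. length vs \<ge> 3 \<and> distinct vs \<and> set vs \<subseteq> {..<n} \<and>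
        (\<forall>k < length vs - 1. E (vs ! k) (vs ! Suc k)) \<and> E (last vs) (hd vs))"

definition graph_is_tree :: "nat \<Rightarrow> (nat \<Rightarrow> nat \<Rightarrow> bool) \<Rightarrow> bool" where
  "graph_is_tree n E \<longleftrightarrow> graph_connected n E \<and> \<not> graph_has_cycle n E"

end

theory Submission
  imports Defs
begin

definition Lm :: "(nat \<Rightarrow> nat) \<Rightarrow> nat \<Rightarrow> nat \<Rightarrow> (nat\<times>nat) list \<Rightarrow> (nat\<times>nat) list" where
"Lm md e k q = (if k mod md e = 0 then q else
   (case q of [] \<Rightarrow> [(e, k mod md e)]
    | (a#q') \<Rightarrow> if fst a = e then (if (k mod md e + snd a) mod md e = 0 then q'
                 else (e, (k mod md e + snd a) mod md e) # q')
               else (e, k mod md e) # q))"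

fun red :: "(nat \<Rightarrow> nat) \<Rightarrow> (nat\<times>nat) list \<Rightarrow> bool" where
"red md [] = True" |
"red md [a] = (0 < snd a \<and> snd a < md (fst a))" |
"red md (a#b#q) = (0 < snd a \<and> snd a < md (fst a) \<and> fst a \<noteq> fst b \<and> red md (b#q))"

lemma red_tl: "red md (a#q) \<Longrightarrow> red md q"
  by (cases q) auto

lemma red_hd: "red md (a#q) \<Longrightarrow> 0 < snd a \<and> snd a < md (fst a)"
  by (cases q) auto

lemma red_hd2: "red md (a#b#q) \<Longrightarrow> fst a \<noteq> fst b"
  by auto

lemma Lm_mod: "Lm md e (k mod md e) = Lm md e k"
  by (rule ext) (simp add: Lm_def mod_mod_trivial split: list.splits)

lemma Lm_zero: "k mod md e = 0 \<Longrightarrow> Lm md e k q = q"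
  by (simp add: Lm_def)

lemma Lm_cons: "red md (a#q) \<Longrightarrow> Lm md (fst a) (snd a) q = a # q"
  apply (cases q)
   apply (cases a) apply (auto simp: Lm_def)
  done

lemma Lm_red: assumes "0 < md e" "red md q" shows "red md (Lm md e k q)"
proof (cases "k mod md e = 0")
  case True then show ?thesis using assms by (simp add: Lm_def)
next
  case False
  show ?thesis
  proof (cases q)
    case Nil then show ?thesis using False assms by (simp add: Lm_def)
  next
    case (Cons a q')
    have ha: "0 < snd a" "snd a < md (fst a)" using red_hd assms(2) Cons by blast+
    have rq': "red md q'" using red_tl assms(2) Cons by blast
    show ?thesis
    proof (cases "fst a = e")
      case True
      show ?thesis
      proof (cases "(k mod md e + snd a) mod md e = 0")
        case True2: True
        then show ?thesis using Cons False True rq' by (simp add: Lm_def)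
      next
        case False2: False
        have "red md ((e, (k mod md e + snd a) mod md e) # q')"
          using rq' False2 assms(1) assms(2) Cons True
          by (cases q') (auto)
        then show ?thesis using Cons False True False2 by (simp add: Lm_def)
      qed
    next
      case False3: False
      have "red md ((e, k mod md e) # a # q')"
        using assms False False3 Cons by auto
      then show ?thesis using Cons False False3 by (simp add: Lm_def)
    qed
  qed
qed



lemma Lm_same: assumes "0 < x" "x < md e" "r = [] \<or> fst (hd r) \<noteq> e"
  shows "Lm md e k ((e,x)#r) = (if (k+x) mod md e = 0 then r else (e, (k+x) mod md e) # r)"
proof -
  have m: "x mod md e = x" using assms by simp
  show ?thesis
  proof (cases "k mod md e = 0")
    case True
    have "(k + x) mod md e = x" using True m by (metis add_0 mod_add_left_eq)
    then show ?thesis using True assms by (simp add: Lm_def)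
  next
    case False
    then show ?thesis by (simp add: Lm_def mod_add_left_eq)
  qed
qed

lemma Lm_other: assumes "r = [] \<or> fst (hd r) \<noteq> e"
  shows "Lm md e k r = (if k mod md e = 0 then r else (e, k mod md e) # r)"
  using assms by (cases r) (auto simp: Lm_def)

lemma Lm_add: assumes "0 < md e" "red md q" shows "Lm md e j (Lm md e k q) = Lm md e (j+k) q"
proof -
  let ?m = "md e"
  show ?thesis
  proof (cases "q \<noteq> [] \<and> fst (hd q) = e")
    case True
    then obtain x r where q: "q = (e,x)#r" by (cases q) auto
    have hx: "0 < x" "x < ?m" using red_hd assms(2) q by fastforce+
    have hr: "r = [] \<or> fst (hd r) \<noteq> e" using assms(2) q by (cases r) auto
    show ?thesis
    proof (cases "(k+x) mod ?m = 0")
      case True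
      have "(j + k + x) mod ?m = j mod ?m" using True
        by (metis add.assoc add.right_neutral mod_add_right_eq)
      then show ?thesis using True q hx hr by (simp add: Lm_same Lm_other add.assoc)
    next
      case False
      have p: "0 < (k+x) mod ?m" "(k+x) mod ?m < ?m" using False assms(1) by auto
      have "(j + (k + x) mod ?m) mod ?m = (j + k + x) mod ?m"
        by (simp add: mod_add_right_eq add.assoc)
      then show ?thesis using False q hx hr p by (simp add: Lm_same add.assoc)
    qed
  next
    case False
    then have hq: "q = [] \<or> fst (hd q) \<noteq> e" by auto
    show ?thesis
    proof (cases "k mod ?m = 0")
      case True
      have "(j + k) mod ?m = j mod ?m" using True by (metis add.right_neutral mod_add_right_eq)
      then show ?thesis using True hq by (simp add: Lm_other)
    next
      case False
      have p: "0 < k mod ?m" "k mod ?m < ?m" using False assms(1) by auto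
      have "(j + k mod ?m) mod ?m = (j + k) mod ?m" by (simp add: mod_add_right_eq)
      then show ?thesis using False hq p by (simp add: Lm_same Lm_other)
    qed
  qed
qed


definition Ml :: "(nat \<Rightarrow> nat) \<Rightarrow> (nat\<times>nat) list \<Rightarrow> (nat\<times>nat) list \<Rightarrow> (nat\<times>nat) list" where
"Ml md f q = foldr (\<lambda>a. Lm md (fst a) (snd a)) f q"

lemma Ml_Nil[simp]: "Ml md [] q = q" by (simp add: Ml_def)
lemma Ml_Cons[simp]: "Ml md (a#f) q = Lm md (fst a) (snd a) (Ml md f q)" by (simp add: Ml_def)
lemma Ml_append: "Ml md (f@g) q = Ml md f (Ml md g q)" by (simp add: Ml_def)

lemma Ml_red: "(\<forall>e. 0<md e) \<Longrightarrow> red md q \<Longrightarrow> red md (Ml md f q)"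
  by (induction f) (auto intro: Lm_red)

lemma Ml_Lm: assumes "\<forall>e. 0<md e" "red md q"
  shows "Ml md (Lm md e k f) q = Lm md e k (Ml md f q)"
proof (cases "k mod md e = 0")
  case True then show ?thesis by (simp add: Lm_zero)
next
  case False
  have rr: "red md (Ml md f' q)" for f' using Ml_red assms by blast
  show ?thesis
  proof (cases f)
    case Nil then show ?thesis using False by (simp add: Lm_def Lm_mod)
  next
    case (Cons a f')
    show ?thesis
    proof (cases "fst a = e")
      case True
      show ?thesis
      proof (cases "(k mod md e + snd a) mod md e = 0")
        case True2: True
        have "(k + snd a) mod md e = 0" using True2 by (simp add: mod_add_left_eq)
        have e1: "Lm md e k f = f'" using Cons True True2 False by (simp add: Lm_def)
        have "Lm md e k (Ml md f q) = Ml md f' q"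
          using Cons True Lm_add[OF _ rr, of e k "snd a" f'] assms(1) Lm_zero \<open>(k + snd a) mod md e = 0\<close> by simp
        then show ?thesis using e1 by simp
      next
        case False2: False
        have m: "Lm md e ((k mod md e + snd a) mod md e) = Lm md e (k + snd a)"
          by (metis Lm_mod mod_add_left_eq)
        have e1: "Lm md e k f = (e, (k mod md e + snd a) mod md e) # f'"
          using Cons True False2 False by (simp add: Lm_def)
        have "Lm md e k (Ml md f q) = Lm md e (k + snd a) (Ml md f' q)"
          using Cons True Lm_add[OF _ rr, of e k "snd a" f'] assms(1) by simp
        then show ?thesis using e1 m by simp
      qed
    next
      case False3: False
      have e1: "Lm md e k f = (e, k mod md e) # f" using Cons False False3 by (simp add: Lm_def)
      show ?thesis using e1 Lm_mod[of md e k] by simp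
    qed
  qed
qed

lemma Ml_Ml: assumes "\<forall>e. 0<md e" "red md q"
  shows "Ml md g (Ml md f q) = Ml md (Ml md g f) q"
  by (induction g) (simp_all add: Ml_Lm[OF assms])

lemma red_append: "red md (xs @ ys) \<longleftrightarrow> red md xs \<and> red md ys \<and> (xs = [] \<or> ys = [] \<or> fst (last xs) \<noteq> fst (hd ys))"
proof (induction xs)
  case Nil then show ?case by simp
next
  case (Cons a xs)
  then show ?case
    by (cases xs; cases ys) auto
qed

lemma Ml_app_red: "red md (f @ q) \<Longrightarrow> Ml md f q = f @ q"
proof (induction f)
  case Nil then show ?case by simp
next
  case (Cons a f)
  have "red md (f @ q)" using Cons.prems red_tl by (metis append_Cons)
  then show ?case using Cons Lm_cons by (metis Ml_Cons append_Cons)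
qed

lemma Ml_nil: "red md f \<Longrightarrow> Ml md f [] = f"
  using Ml_app_red[of md f "[]"] by simp

lemma Ml_inv1: assumes "\<forall>e. 0<md e" "red md q"
  shows "Ml md (rev (map (\<lambda>e. (e, md e - 1)) es)) (Ml md (map (\<lambda>e. (e, 1)) es) q) = q"
proof (induction es)
  case Nil then show ?case by simp
next
  case (Cons e es)
  have r: "red md (Ml md (map (\<lambda>e. (e, 1)) es) q)" using Ml_red assms by blast
  have "Lm md e (md e - 1) (Lm md e 1 (Ml md (map (\<lambda>e. (e, 1)) es) q)) = Ml md (map (\<lambda>e. (e, 1)) es) q"
    using Lm_add[OF _ r] assms(1) Lm_zero by (metis Suc_pred' add.commute mod_self plus_1_eq_Suc)
  then show ?case using Cons by (simp add: Ml_append)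
qed

lemma Ml_inv2: assumes "\<forall>e. 0<md e"
  shows "red md q \<Longrightarrow> Ml md (map (\<lambda>e. (e, 1)) es) (Ml md (rev (map (\<lambda>e. (e, md e - 1)) es)) q) = q"
proof (induction es arbitrary: q)
  case Nil then show ?case by simp
next
  case (Cons e es)
  have r: "red md q" by fact
  have r2: "red md (Lm md e (md e - 1) q)" using Lm_red assms r by blast
  have "Lm md e 1 (Lm md e (md e - 1) q) = q"
    using Lm_add[OF _ r] assms(1) Lm_zero by (metis Suc_pred' mod_self plus_1_eq_Suc)
  then show ?case using Cons.IH[OF r2] by (simp add: Ml_append)
qed

lemma fp_comm: assumes "\<forall>e. 0<md e" "red md f" "1 < md i" "Ml md f [(i,1)] = Lm md i 1 f"
  shows "f = [] \<or> fst (hd f) = i"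
proof (rule ccontr)
  assume "\<not> (f = [] \<or> fst (hd f) = i)"
  then have ne: "f \<noteq> []" and hd: "fst (hd f) \<noteq> i" by auto
  have L: "Lm md i 1 f = (i,1) # f" using Lm_other[of f i md 1] hd assms(3) by simp
  show False
  proof (cases "fst (last f) = i")
    case False
    have "red md (f @ [(i,1)])" using assms(2,3) False ne by (simp add: red_append)
    then have "Ml md f [(i,1)] = f @ [(i,1)]" by (rule Ml_app_red)
    then have "f @ [(i,1)] = (i,1) # f" using L assms(4) by simp
    then have "hd f = (i,1)" using ne by (cases f) auto
    then show False using hd by simp
  next
    case True
    obtain f0 x where f: "f = f0 @ [(i,x)]" using ne True
      by (metis append_butlast_last_id prod.collapse)
    have rf: "red md f0" "0 < x" "x < md i" "f0 = [] \<or> fst (last f0) \<noteq> i"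
      using assms(2) f by (auto simp: red_append)
    define r where "r = (if (x+1) mod md i = 0 then [] else [(i, (x+1) mod md i)])"
    have "Lm md i x [(i,1)] = r" using Lm_same[of 1 md i "[]" x] assms(3) r_def by (simp add: add.commute)
    then have e1: "Ml md f [(i,1)] = Ml md f0 r" using f by (simp add: Ml_append)
    have "red md (f0 @ r)" using rf assms(1) r_def by (auto simp: red_append)
    then have "Ml md f0 r = f0 @ r" by (rule Ml_app_red)
    moreover have "length r \<le> 1" using r_def by auto
    ultimately have "length (Ml md f [(i,1)]) \<le> length f" using e1 f by simp
    then show False using L assms(4) by simp
  qed
qed


locale cox_tree =
  fixes n :: nat and m :: "nat \<Rightarrow> nat \<Rightarrow> enat"
  assumes cm: "coxeter_matrix n m"
    and conn: "graph_connected n (cox_adj n m)"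
    and nocyc: "\<not> graph_has_cycle n (cox_adj n m)"
    and npos: "0 < n"
begin

abbreviation "E \<equiv> cox_adj n m"
definition "R = {(a,b). cox_adj n m a b}"
definition "dep i = (LEAST k. (0,i) \<in> R ^^ k)"
definition "par i = (SOME j. cox_adj n m j i \<and> Suc (dep j) = dep i)"

lemma adj_sym: "E a b \<Longrightarrow> E b a"
  using cm unfolding coxeter_matrix_def cox_adj_def by auto

lemma adj_lt: "E a b \<Longrightarrow> a < n \<and> b < n \<and> a \<noteq> b"
  unfolding cox_adj_def by auto

lemma dep_ex: "i < n \<Longrightarrow> (0,i) \<in> R ^^ dep i"
proof -
  assume "i < n"
  then have "(0,i) \<in> R\<^sup>*" using conn npos unfolding graph_connected_def R_def by auto
  then obtain k where "(0,i) \<in> R ^^ k" using rtrancl_power by blast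
  then show ?thesis unfolding dep_def by (rule LeastI)
qed

lemma dep_le: "(0,i) \<in> R ^^ k \<Longrightarrow> dep i \<le> k"
  unfolding dep_def by (rule Least_le)

lemma dep0: "dep 0 = 0"
  using dep_le[of 0 0] by simp

lemma dep_zero_iff: "i < n \<Longrightarrow> dep i = 0 \<longleftrightarrow> i = 0"
  using dep_ex[of i] dep0 by auto

lemma adj_dep: "E a b \<Longrightarrow> dep b \<le> Suc (dep a)"
proof -
  assume e: "E a b"
  have "(0,a) \<in> R ^^ dep a" using dep_ex adj_lt e by blast
  moreover have "(a,b) \<in> R" using e R_def by simp
  ultimately have "(0,b) \<in> R ^^ Suc (dep a)" by auto
  then show ?thesis by (rule dep_le)
qed

lemma par_prop: assumes "i < n" "i \<noteq> 0"
  shows "E (par i) i \<and> Suc (dep (par i)) = dep i"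
proof -
  have "dep i \<noteq> 0" using dep_zero_iff assms by auto
  then obtain k where k: "dep i = Suc k" by (cases "dep i") auto
  have "(0,i) \<in> R ^^ Suc k" using dep_ex assms k by metis
  then obtain j where j: "(0,j) \<in> R ^^ k" "(j,i) \<in> R" by auto
  have "dep j \<le> k" using j dep_le by blast
  moreover have "dep i \<le> Suc (dep j)" using adj_dep j R_def by auto
  ultimately have "E j i \<and> Suc (dep j) = dep i" using j k R_def by auto
  then show ?thesis unfolding par_def by (rule someI)
qed

lemma par_adj: "i < n \<Longrightarrow> i \<noteq> 0 \<Longrightarrow> E (par i) i"
  using par_prop by blast

lemma par_dep: "i < n \<Longrightarrow> i \<noteq> 0 \<Longrightarrow> Suc (dep (par i)) = dep i"
  using par_prop by blast

lemma par_lt: "i < n \<Longrightarrow> i \<noteq> 0 \<Longrightarrow> par i < n"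
  using par_adj adj_lt by blast

definition "parp t i = (par ^^ t) i"

lemma parp_prop: "i < n \<Longrightarrow> t \<le> dep i \<Longrightarrow> parp t i < n \<and> dep (parp t i) = dep i - t"
proof (induction t)
  case 0 then show ?case by (simp add: parp_def)
next
  case (Suc t)
  then have h: "parp t i < n" "dep (parp t i) = dep i - t" by auto
  have ne: "parp t i \<noteq> 0"
  proof
    assume "parp t i = 0"
    then have "dep i - t = 0" using h dep0 by simp
    then show False using Suc.prems by simp
  qed
  have "parp (Suc t) i = par (parp t i)" by (simp add: parp_def)
  then show ?case using par_lt[OF h(1) ne] par_dep[OF h(1) ne] h by auto
qed

lemma parp_Suc: "parp (Suc t) i = par (parp t i)"
  by (simp add: parp_def)

lemma parp_Suc': "parp (Suc t) i = parp t (par i)"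
  by (simp add: parp_def funpow_Suc_right del: funpow.simps)

lemma parp_ne0: "i < n \<Longrightarrow> t < dep i \<Longrightarrow> parp t i \<noteq> 0"
proof
  assume a: "i < n" "t < dep i" "parp t i = 0"
  then have "dep i - t = 0" using parp_prop[of i t] dep0 by simp
  then show False using a by simp
qed

lemma parp_adj: "i < n \<Longrightarrow> t < dep i \<Longrightarrow> E (parp (Suc t) i) (parp t i)"
  using parp_prop[of i t] parp_ne0[of i t] par_adj parp_Suc by auto

lemma parp_dep: "i < n \<Longrightarrow> parp (dep i) i = 0"
  using parp_prop[of i "dep i"] dep_zero_iff by auto


lemma parp0[simp]: "parp 0 i = i" by (simp add: parp_def)

lemma edge_par_aux: assumes e: "E a b" and dab: "dep a \<le> dep b"
  shows "b \<noteq> 0 \<and> a = par b"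
proof (rule ccontr)
  assume nb: "\<not> (b \<noteq> 0 \<and> a = par b)"
  have an: "a < n" and bn: "b < n" and ab: "a \<noteq> b" using adj_lt e by auto
  have db: "dep b \<le> Suc (dep a)" using adj_dep e by blast
  define \<delta> where "\<delta> = dep b - dep a"
  have d1: "\<delta> \<le> 1" "dep b = dep a + \<delta>" using db dab \<delta>_def by auto
  define P where "P j \<longleftrightarrow> parp j a = parp (j+\<delta>) b" for j
  have Pd: "P (dep a)" unfolding P_def using parp_dep[OF an] parp_dep[OF bn] d1(2) by simp
  define j where "j = (LEAST j. P j)"
  have Pj: "P j" unfolding j_def using Pd by (rule LeastI)
  have jle: "j \<le> dep a" unfolding j_def using Pd by (rule Least_le)
  have jmin: "\<And>t. t < j \<Longrightarrow> \<not> P t" unfolding j_def by (rule not_less_Least)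
  have j1: "1 \<le> j"
  proof (rule ccontr)
    assume "\<not> 1 \<le> j"
    then have "j = 0" by simp
    then have "a = parp \<delta> b" using Pj P_def by simp
    moreover have "\<delta> = 0 \<or> \<delta> = 1" using d1 by auto
    moreover have "\<delta> = 1 \<Longrightarrow> b \<noteq> 0" using d1 dep0 by (metis Zero_not_Suc add_is_0 one_neq_zero)
    ultimately show False using ab nb by (auto simp: parp_def)
  qed
  define L where "L = 2*j+1+\<delta>"
  define g where "g t = (if t \<le> j then parp t a else parp (L-1-t) b)" for t
  define vs where "vs = map g [0..<L]"
  have ga: "\<And>t. t \<le> j \<Longrightarrow> g t < n \<and> dep (g t) = dep a - t"
    using parp_prop[OF an] jle g_def by auto
  have gb: "\<And>t. j < t \<Longrightarrow> t < L \<Longrightarrow> g t < n \<and> dep (g t) = dep b - (L-1-t) \<and> L-1-t < dep b"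
  proof -
    fix t assume t: "j < t" "t < L"
    have "L-1-t < dep b" using t L_def d1 jle j1 by auto
    then show "g t < n \<and> dep (g t) = dep b - (L-1-t) \<and> L-1-t < dep b"
      using parp_prop[OF bn, of "L-1-t"] t g_def by auto
  qed
  have neq: "g t \<noteq> g t'" if tt: "t < t'" "t' < L" for t t'
  proof
    assume eq: "g t = g t'"
    show False
    proof (cases "t' \<le> j")
      case True
      then show False using ga[of t] ga[of t'] eq tt jle by auto
    next
      case False
      show False
      proof (cases "j < t")
        case True
        then show False using gb[of t] gb[of t'] eq tt False by auto
      next
        case False2: False
        define u where "u = L-1-t'"
        have g1: "g t = parp t a" using False2 g_def by simp
        have g2: "g t' = parp u b" using False g_def u_def by simp
        have dd: "dep a - t = dep b - u" "u < dep b" using ga[of t] gb[of t'] False False2 tt eq u_def by auto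
        have "u = t + \<delta>" using dd d1 False2 jle by auto
        moreover have "t < j" using \<open>u = t + \<delta>\<close> u_def L_def tt False by auto
        ultimately show False using jmin[of t] P_def g1 g2 eq by auto
      qed
    qed
  qed
  have "graph_has_cycle n E"
    unfolding graph_has_cycle_def
  proof (intro exI conjI)
    show "3 \<le> length vs" using vs_def L_def j1 by simp
    show "distinct vs" unfolding vs_def distinct_map
    proof
      show "distinct [0..<L]" by simp
      show "inj_on g (set [0..<L])"
        unfolding inj_on_def
      proof (intro ballI impI)
        fix x y assume xy: "x \<in> set [0..<L]" "y \<in> set [0..<L]" "g x = g y"
        show "x = y" using neq xy by (metis atLeastLessThan_iff linorder_neqE_nat set_upt)
      qed
    qed
    show "set vs \<subseteq> {..<n}"
    proof
      fix v assume "v \<in> set vs"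
      then obtain t where "t < L" "v = g t" using vs_def by auto
      then show "v \<in> {..<n}" using ga gb by (cases "t \<le> j") auto
    qed
    show "\<forall>k<length vs - 1. E (vs ! k) (vs ! Suc k)"
    proof (intro allI impI)
      fix k assume k: "k < length vs - 1"
      then have kL: "Suc k < L" using vs_def by simp
      have "E (g k) (g (Suc k))"
      proof (cases "Suc k \<le> j")
        case True
        have "E (parp (Suc k) a) (parp k a)" using parp_adj[OF an, of k] True jle by simp
        then show ?thesis using True g_def adj_sym by simp
      next
        case False
        show ?thesis
        proof (cases "k = j")
          case True
          define u where "u = j + \<delta> - 1"
          have u: "Suc u = j + \<delta>" "u < dep b" using u_def j1 jle d1 by auto
          have "E (parp (Suc u) b) (parp u b)" using parp_adj[OF bn u(2)] .
          moreover have "g k = parp (Suc u) b" using True g_def Pj P_def u by simp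
          moreover have "g (Suc k) = parp u b" using True g_def L_def u_def by simp
          ultimately show ?thesis by simp
        next
          case False2: False
          define u where "u = L - 2 - k"
          have "L - 1 - k = Suc u" using u_def kL by simp
          have "u < dep b" using gb[of "Suc k"] u_def kL False by auto
          then have "E (parp (Suc u) b) (parp u b)" using parp_adj[OF bn] by blast
          moreover have "g k = parp (Suc u) b" using False False2 g_def \<open>L - 1 - k = Suc u\<close> by simp
          moreover have "g (Suc k) = parp u b" using False g_def u_def by simp
          ultimately show ?thesis by simp
        qed
      qed
      then show "E (vs ! k) (vs ! Suc k)" using kL vs_def by simp
    qed
    show "E (last vs) (hd vs)"
    proof -
      have "last vs = g (L-1)" using vs_def L_def by (simp add: last_map)
      also have "\<dots> = b" using g_def L_def j1 by simp
      finally have l: "last vs = b" .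
      have "vs \<noteq> []" using vs_def L_def by simp
      then have "hd vs = vs ! 0" by (simp add: hd_conv_nth)
      moreover have "vs ! 0 = g 0" unfolding vs_def using L_def by (simp del: upt_Suc)
      ultimately have "hd vs = g 0" by simp
      then have "hd vs = a" using g_def by simp
      then show ?thesis using l e adj_sym by simp
    qed
  qed
  then show False using nocyc by simp
qed

lemma edge_par: assumes "E a b" shows "(a \<noteq> 0 \<and> b = par a) \<or> (b \<noteq> 0 \<and> a = par b)"
proof (cases "dep a \<le> dep b")
  case True then show ?thesis using edge_par_aux assms by blast
next
  case False then show ?thesis using edge_par_aux[OF adj_sym[OF assms]] by simp
qed


definition "pth i = map (\<lambda>t. parp t i) (rev [0..<dep i])"

lemma pth0: "pth 0 = []" by (simp add: pth_def dep0)

lemma pth_par: assumes "i < n" "i \<noteq> 0" shows "pth i = pth (par i) @ [i]"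
proof -
  obtain d where d: "dep i = Suc d" "dep (par i) = d" using par_dep[OF assms] by auto
  have "rev [0..<Suc d] = map Suc (rev [0..<d]) @ [0]"
    by (simp add: map_Suc_upt[symmetric] rev_map upt_conv_Cons del: upt_Suc)
  then show ?thesis using d by (simp add: pth_def parp_Suc' del: upt_Suc)
qed

lemma pth_set: "i < n \<Longrightarrow> e \<in> set (pth i) \<Longrightarrow> 0 < e \<and> e < n"
  using parp_prop[of i] parp_ne0[of i] by (auto simp: pth_def)

definition "md e = (if 0 < e \<and> e < n then the_enat (m (par e) e) else 1)"

lemma md_pos: "\<forall>e. 0 < md e"
proof
  fix e
  show "0 < md e"
  proof (cases "0 < e \<and> e < n")
    case True
    then have E: "E (par e) e" using par_adj by auto
    then obtain k where k: "m (par e) e = enat k" unfolding cox_adj_def by (cases "m (par e) e") auto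
    have "m (par e) e \<ge> 2" using cm E adj_lt unfolding coxeter_matrix_def by blast
    then show ?thesis using True k md_def by (simp add: numeral_eq_enat)
  qed (auto simp: md_def)
qed

lemma md_prop: assumes "0 < e" "e < n" shows "m (par e) e = enat (md e) \<and> 2 \<le> md e"
proof -
  have E: "E (par e) e" using par_adj assms by auto
  then obtain k where k: "m (par e) e = enat k" unfolding cox_adj_def by (cases "m (par e) e") auto
  have "m (par e) e \<ge> 2" using cm E adj_lt unfolding coxeter_matrix_def by blast
  then show ?thesis using assms k md_def by (simp add: numeral_eq_enat)
qed

definition "Aact i q = Ml md (map (\<lambda>e. (e,1)) (pth i)) q"
definition "Ainv i q = Ml md (rev (map (\<lambda>e. (e, md e - 1)) (pth i))) q"
definition "gen i p = (if snd p then (Ainv i (fst p), False) else (Aact i (fst p), True))"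
definition "valid p = red md (fst p)"
definition "act u p = foldr (\<lambda>l. gen (fst l)) u p"

lemma Aact_red: "red md q \<Longrightarrow> red md (Aact i q)"
  using Ml_red md_pos Aact_def by simp
lemma Ainv_red: "red md q \<Longrightarrow> red md (Ainv i q)"
  using Ml_red md_pos Ainv_def by simp
lemma Ainv_Aact: "red md q \<Longrightarrow> Ainv i (Aact i q) = q"
  using Ml_inv1 md_pos Aact_def Ainv_def by simp
lemma Aact_Ainv: "red md q \<Longrightarrow> Aact i (Ainv i q) = q"
  using Ml_inv2 md_pos Aact_def Ainv_def by simp

lemma gen_valid: "valid p \<Longrightarrow> valid (gen i p)"
  by (simp add: valid_def gen_def Aact_red Ainv_red)

lemma gen_gen: "valid p \<Longrightarrow> gen i (gen i p) = p"
  by (cases p) (auto simp: valid_def gen_def Aact_red Ainv_red Ainv_Aact Aact_Ainv)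

lemma act_Nil[simp]: "act [] p = p" by (simp add: act_def)
lemma act_Cons[simp]: "act (l#u) p = gen (fst l) (act u p)" by (simp add: act_def)
lemma act_append: "act (u@v) p = act u (act v p)" by (simp add: act_def)

lemma act_valid: "valid p \<Longrightarrow> valid (act u p)"
  by (induction u) (auto simp: gen_valid)

lemma Aact_par: "i < n \<Longrightarrow> i \<noteq> 0 \<Longrightarrow> Aact i q = Aact (par i) (Lm md i 1 q)"
  by (simp add: Aact_def pth_par Ml_append)

lemma Ainv_par: "i < n \<Longrightarrow> i \<noteq> 0 \<Longrightarrow> Ainv i q = Lm md i (md i - 1) (Ainv (par i) q)"
  by (simp add: Ainv_def pth_par Ml_append)

lemma funpow_swap: "((f \<circ> g) ^^ k) (f x) = f (((g \<circ> f) ^^ k) x)"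
  by (induction k) auto

lemma rel_child: assumes b: "b < n" "b \<noteq> 0" and v: "valid p"
  shows "((gen (par b) \<circ> gen b) ^^ (md b)) p = p"
proof -
  let ?a = "par b"
  have mp: "0 < md b" using md_pos by simp
  have F: "red md q \<Longrightarrow> ((gen ?a \<circ> gen b) ^^ t) (q, False) = (Lm md b t q, False)" for q t
  proof (induction t)
    case 0 then show ?case by (simp add: Lm_zero)
  next
    case (Suc t)
    have r: "red md (Lm md b t q)" using Lm_red mp Suc.prems by blast
    have r1: "red md (Lm md b 1 (Lm md b t q))" using Lm_red mp r by blast
    have ad: "Lm md b 1 (Lm md b t q) = Lm md b (Suc t) q" using Lm_add[OF mp Suc.prems, of 1 t] by simp
    show ?case using Suc r r1 b ad
      by (simp add: gen_def Aact_par Ainv_Aact)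
  qed
  have T: "red md q \<Longrightarrow> ((gen ?a \<circ> gen b) ^^ t) (q, True) = (Aact ?a (Lm md b (t * (md b - 1)) (Ainv ?a q)), True)" for q t
  proof (induction t)
    case 0 then show ?case by (simp add: Lm_zero Aact_Ainv)
  next
    case (Suc t)
    let ?Y = "Lm md b (t * (md b - 1)) (Ainv ?a q)"
    have r: "red md ?Y" using Lm_red mp Ainv_red Suc.prems by blast
    have "(gen ?a \<circ> gen b) (Aact ?a ?Y, True) = (Aact ?a (Lm md b (md b - 1) ?Y), True)"
      using b r by (simp add: gen_def Ainv_par Ainv_Aact)
    also have "\<dots> = (Aact ?a (Lm md b (Suc t * (md b - 1)) (Ainv ?a q)), True)"
      using Lm_add[OF mp Ainv_red[OF Suc.prems], of "md b - 1" "t * (md b - 1)"] by (simp add: add.commute)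
    finally show ?case using Suc by simp
  qed
  obtain q c where p: "p = (q,c)" by (cases p)
  have rq: "red md q" using v p by (simp add: valid_def)
  show ?thesis
  proof (cases c)
    case True
    have "md b * (md b - 1) mod md b = 0" by simp
    then show ?thesis using T[OF rq, of "md b"] p True rq by (simp add: Lm_zero Aact_Ainv)
  next
    case False
    then show ?thesis using F[OF rq, of "md b"] p rq by (simp add: Lm_zero)
  qed
qed

lemma act_rep: "act (concat (replicate k [(a,False),(b,False)])) p = ((gen a \<circ> gen b) ^^ k) p"
  by (induction k) (auto simp: act_append)

lemma relator_act: assumes r: "r \<in> coxeter_relators n m" and v: "valid p"
  shows "act r p = p"
proof -
  obtain a b k where abk: "r = concat (replicate k [(a,False),(b,False)])" "a < n" "b < n" "m a b = enat k"
    using r unfolding coxeter_relators_def by blast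
  have act: "act r p = ((gen a \<circ> gen b) ^^ k) p" using abk act_rep by simp
  show ?thesis
  proof (cases "a = b")
    case True
    then have "m a b = 1" using cm abk unfolding coxeter_matrix_def by auto
    then have "k = 1" using abk by (simp add: one_enat_def)
    then show ?thesis using act True gen_gen v by simp
  next
    case False
    then have E: "E a b" using abk unfolding cox_adj_def by simp
    have sym: "m b a = m a b" using cm abk unfolding coxeter_matrix_def by auto
    show ?thesis
    proof (cases "b \<noteq> 0 \<and> a = par b")
      case True
      then have "md b = k" using md_prop[of b] abk by auto
      then show ?thesis using act rel_child[of b p] True abk v by simp
    next
      case False2: False
      then have ab: "a \<noteq> 0" "b = par a" using edge_par[OF E] by auto
      then have "md a = k" using md_prop[of a] abk sym by auto
      have v2: "valid (gen a p)" using gen_valid v by blast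
      have "((gen a \<circ> gen b) ^^ k) p = ((gen a \<circ> gen b) ^^ k) (gen a (gen a p))"
        using gen_gen v by simp
      also have "\<dots> = gen a (((gen b \<circ> gen a) ^^ k) (gen a p))" by (rule funpow_swap)
      also have "\<dots> = gen a (gen a p)" using rel_child[of a "gen a p"] ab abk v2 \<open>md a = k\<close> by simp
      also have "\<dots> = p" using gen_gen v by simp
      finally show ?thesis using act by simp
    qed
  qed
qed

lemma pres_eq_act: "pres_eq n (coxeter_relators n m) u v \<Longrightarrow> valid p \<Longrightarrow> act u p = act v p"
proof (induction arbitrary: p rule: pres_eq.induct)
  case (cancel l u v)
  have "valid (act v p)" using act_valid cancel by blast
  then show ?case using gen_gen by (simp add: act_append inv_letter_def)
next
  case (relator r u v)
  have "valid (act v p)" using act_valid relator by blast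
  then show ?case using relator_act relator by (simp add: act_append)
qed auto

end




lemma red_letters: "red md q \<Longrightarrow> a \<in> set q \<Longrightarrow> 0 < snd a \<and> snd a < md (fst a)"
proof (induction q)
  case (Cons x q)
  show ?case
  proof (cases "a = x")
    case True then show ?thesis using red_hd[OF Cons.prems(1)] by simp
  next
    case False
    then have "a \<in> set q" using Cons.prems(2) by simp
    then show ?thesis using Cons.IH red_tl[OF Cons.prems(1)] by blast
  qed
qed simp

locale csys = cox_tree n m + G: group W for n m and W :: "('g, 'b) monoid_scheme" +
  fixes w :: "nat \<Rightarrow> 'g"
  assumes pres: "has_presentation W n w (coxeter_relators n m)"
begin

abbreviation "ev \<equiv> eval_word W w"
abbreviation "Rel \<equiv> coxeter_relators n m"

lemma w_carr: "i < n \<Longrightarrow> w i \<in> carrier W" using pres unfolding has_presentation_def by blast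

lemma ev_carr: "word_over n u \<Longrightarrow> ev u \<in> carrier W"
proof (induction u)
  case (Cons l u) then show ?case
    by (cases l) (auto simp: word_over_def w_carr)
qed simp

lemma ev_append: "word_over n u \<Longrightarrow> word_over n v \<Longrightarrow> ev (u @ v) = ev u \<otimes>\<^bsub>W\<^esub> ev v"
proof (induction u)
  case (Cons l u)
  then have wu: "word_over n u" and l: "fst l < n" by (auto simp: word_over_def)
  then show ?case using Cons ev_carr w_carr by (cases l) (auto simp: G.m_assoc)
qed (simp add: ev_carr)

lemma word_over_append[simp]: "word_over n (u @ v) \<longleftrightarrow> word_over n u \<and> word_over n v"
  by (auto simp: word_over_def)

lemma pres_ev: "word_over n u \<Longrightarrow> ev u = \<one>\<^bsub>W\<^esub> \<longleftrightarrow> pres_eq n Rel u []"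
proof -
  assume u: "word_over n u"
  have "\<forall>u. word_over n u \<longrightarrow> (ev u = \<one>\<^bsub>W\<^esub> \<longleftrightarrow> pres_eq n Rel u [])"
    using pres unfolding has_presentation_def by blast
  then show ?thesis using u by blast
qed

lemma gen_carr: "generate W (w ` {..<n}) = carrier W"
  using pres unfolding has_presentation_def by blast

lemma rel_ev: "r \<in> Rel \<Longrightarrow> ev r = \<one>\<^bsub>W\<^esub>"
proof -
  assume r: "r \<in> Rel"
  have "word_over n r" using r unfolding coxeter_relators_def word_over_def by (auto split: if_splits)
  moreover have "pres_eq n Rel r []" using pres_eq.relator[OF r, where u="[]" and v="[]"] pres_eq.sym by simp
  ultimately show ?thesis using pres_ev by blast
qed

lemma ev_rep: "a < n \<Longrightarrow> b < n \<Longrightarrow> ev (concat (replicate k [(a,False),(b,False)])) = (w a \<otimes>\<^bsub>W\<^esub> w b) [^]\<^bsub>W\<^esub> k"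
proof (induction k)
  case (Suc k)
  have wo: "word_over n (concat (replicate k [(a,False),(b,False)]))" using Suc.prems by (auto simp: word_over_def)
  have "ev (concat (replicate (Suc k) [(a,False),(b,False)])) = w a \<otimes>\<^bsub>W\<^esub> (w b \<otimes>\<^bsub>W\<^esub> ev (concat (replicate k [(a,False),(b,False)])))"
    by simp
  also have "\<dots> = (w a \<otimes>\<^bsub>W\<^esub> w b) \<otimes>\<^bsub>W\<^esub> (w a \<otimes>\<^bsub>W\<^esub> w b) [^]\<^bsub>W\<^esub> k"
    using Suc w_carr by (simp add: G.m_assoc)
  also have "\<dots> = (w a \<otimes>\<^bsub>W\<^esub> w b) [^]\<^bsub>W\<^esub> Suc k"
    using Suc w_carr G.nat_pow_Suc2 by simp
  finally show ?case .
qed simp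

lemma w_sq: "i < n \<Longrightarrow> w i \<otimes>\<^bsub>W\<^esub> w i = \<one>\<^bsub>W\<^esub>"
proof -
  assume i: "i < n"
  have "m i i = enat 1" using cm i unfolding coxeter_matrix_def by (simp add: one_enat_def)
  then have "concat (replicate 1 [(i,False),(i,False)]) \<in> Rel"
    unfolding coxeter_relators_def using i by blast
  then have "ev (concat (replicate 1 [(i,False),(i,False)])) = \<one>\<^bsub>W\<^esub>" by (rule rel_ev)
  then show ?thesis using w_carr[OF i] by simp
qed

lemma w_inv: "i < n \<Longrightarrow> inv\<^bsub>W\<^esub> (w i) = w i"
  using w_sq w_carr G.inv_equality by blast

lemma ev_word: "x \<in> carrier W \<Longrightarrow> \<exists>u. word_over n u \<and> ev u = x"
proof -
  assume "x \<in> carrier W"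
  then have "x \<in> generate W (w ` {..<n})" using gen_carr by simp
  then show ?thesis
  proof (induction rule: generate.induct)
    case one then show ?case by (intro exI[of _ "[]"]) (simp add: word_over_def)
  next
    case (incl h)
    then obtain i where "i < n" "h = w i" by auto
    then show ?case using w_carr by (intro exI[of _ "[(i,False)]"]) (simp add: word_over_def)
  next
    case (inv h)
    then obtain i where "i < n" "h = w i" by auto
    then show ?case using w_carr by (intro exI[of _ "[(i,True)]"]) (simp add: word_over_def)
  next
    case (eng h1 h2)
    then obtain u1 u2 where "word_over n u1" "ev u1 = h1" "word_over n u2" "ev u2 = h2" by blast
    then show ?case using ev_append by (intro exI[of _ "u1 @ u2"]) simp
  qed
qed

definition "invw u = rev (map inv_letter u)"

lemma invw_over: "word_over n u \<Longrightarrow> word_over n (invw u)"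
  by (auto simp: word_over_def invw_def inv_letter_def)

lemma ev_invw: "word_over n u \<Longrightarrow> ev (invw u) = inv\<^bsub>W\<^esub> (ev u)"
proof (induction u)
  case Nil then show ?case by (simp add: invw_def)
next
  case (Cons l u)
  obtain i b where l: "l = (i,b)" by (cases l)
  have i: "i < n" and wu: "word_over n u" using Cons.prems l by (auto simp: word_over_def)
  have iw: "word_over n (invw u)" using invw_over wu by blast
  have "invw (l#u) = invw u @ [(i, \<not> b)]" by (simp add: invw_def l inv_letter_def)
  then have "ev (invw (l#u)) = inv\<^bsub>W\<^esub> (ev u) \<otimes>\<^bsub>W\<^esub> (if \<not> b then inv\<^bsub>W\<^esub> (w i) else w i)"
    using ev_append[OF iw, of "[(i, \<not> b)]"] Cons.IH[OF wu] i w_carr by (simp add: word_over_def)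
  also have "\<dots> = inv\<^bsub>W\<^esub> (ev u) \<otimes>\<^bsub>W\<^esub> w i" using w_inv i by simp
  also have "\<dots> = inv\<^bsub>W\<^esub> ((if b then inv\<^bsub>W\<^esub> (w i) else w i) \<otimes>\<^bsub>W\<^esub> ev u)"
    using w_inv i w_carr ev_carr[OF wu] by (simp add: G.inv_mult_group)
  finally show ?case by (simp add: l)
qed

lemma act_invw: "valid p \<Longrightarrow> act (invw u) (act u p) = p"
proof (induction u arbitrary: p)
  case Nil then show ?case by (simp add: invw_def)
next
  case (Cons l u)
  have "invw (l#u) = invw u @ [inv_letter l]" by (simp add: invw_def)
  moreover have "valid (act u p)" using act_valid Cons.prems by blast
  ultimately show ?case using Cons gen_gen by (simp add: act_append inv_letter_def)
qed

lemma act_wd: assumes "word_over n u" "word_over n v" "ev u = ev v" "valid p"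
  shows "act u p = act v p"
proof -
  have "ev (u @ invw v) = ev u \<otimes>\<^bsub>W\<^esub> inv\<^bsub>W\<^esub> (ev v)"
    using assms ev_append invw_over ev_invw by simp
  also have "\<dots> = \<one>\<^bsub>W\<^esub>" using assms ev_carr by simp
  finally have "pres_eq n Rel (u @ invw v) []" using pres_ev assms invw_over by simp
  moreover have vp: "valid (act v p)" using act_valid assms by blast
  ultimately have "act (u @ invw v) (act v p) = act v p" using pres_eq_act by simp
  then show ?thesis using act_invw[OF assms(4)] by (simp add: act_append)
qed

end



lemma (in group) pow_mod_eq: assumes "x \<in> carrier G" "x [^] (N::nat) = \<one>"
  shows "x [^] k = x [^] (k mod N)"
proof -
  have "x [^] k = x [^] (N * (k div N)) \<otimes> x [^] (k mod N)"
    using assms nat_pow_mult[of x "N * (k div N)" "k mod N"] by (metis mult_div_mod_eq)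
  moreover have "x [^] (N * (k div N)) = \<one>" using assms nat_pow_pow[of x N "k div N"] by simp
  ultimately show ?thesis using assms by simp
qed

context csys begin

definition "xe e = w (par e) \<otimes>\<^bsub>W\<^esub> w e"
definition "evL a = (xe (fst a)) [^]\<^bsub>W\<^esub> (snd a)"
definition "evF q = foldr (\<lambda>a acc. evL a \<otimes>\<^bsub>W\<^esub> acc) q \<one>\<^bsub>W\<^esub>"
definition "theta p = (if snd p then w 0 \<otimes>\<^bsub>W\<^esub> evF (fst p) else evF (fst p))"

lemma evF_Nil[simp]: "evF [] = \<one>\<^bsub>W\<^esub>" by (simp add: evF_def)
lemma evF_Cons[simp]: "evF (a#q) = evL a \<otimes>\<^bsub>W\<^esub> evF q" by (simp add: evF_def)

lemma xe_carr: "0 < e \<Longrightarrow> e < n \<Longrightarrow> xe e \<in> carrier W"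
  using xe_def w_carr par_lt by simp

lemma xe_pow: assumes "0 < e" "e < n" shows "xe e [^]\<^bsub>W\<^esub> md e = \<one>\<^bsub>W\<^esub>"
proof -
  have p: "par e < n" using par_lt assms by simp
  have "concat (replicate (md e) [(par e,False),(e,False)]) \<in> Rel"
    unfolding coxeter_relators_def using md_prop[OF assms] p assms by blast
  then have "ev (concat (replicate (md e) [(par e,False),(e,False)])) = \<one>\<^bsub>W\<^esub>" by (rule rel_ev)
  then show ?thesis using ev_rep[OF p assms(2), of "md e"] by (simp add: xe_def)
qed

lemma xe_mod: "0 < e \<Longrightarrow> e < n \<Longrightarrow> xe e [^]\<^bsub>W\<^esub> k = xe e [^]\<^bsub>W\<^esub> (k mod md e)"
  using G.pow_mod_eq xe_carr xe_pow by blast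

lemma red_range: "red md q \<Longrightarrow> a \<in> set q \<Longrightarrow> 0 < fst a \<and> fst a < n"
proof -
  assume "red md q" "a \<in> set q"
  then have "0 < snd a" "snd a < md (fst a)" using red_letters by blast+
  then have "md (fst a) \<noteq> 1" by simp
  then show ?thesis unfolding md_def by (auto split: if_splits)
qed

lemma evF_carr: "red md q \<Longrightarrow> evF q \<in> carrier W"
proof (induction q)
  case (Cons a q)
  have "0 < fst a \<and> fst a < n" using red_range Cons.prems by simp
  then show ?case using Cons red_tl xe_carr by (simp add: evL_def)
qed simp

lemma evF_Lm: assumes e: "0 < e" "e < n" and r: "red md q"
  shows "evF (Lm md e k q) = xe e [^]\<^bsub>W\<^esub> k \<otimes>\<^bsub>W\<^esub> evF q"
proof -
  have xc: "xe e \<in> carrier W" using xe_carr e by blast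
  show ?thesis
  proof (cases "q \<noteq> [] \<and> fst (hd q) = e")
    case True
    then obtain x r' where q: "q = (e,x)#r'" by (cases q) auto
    have hx: "0 < x" "x < md e" using red_hd r q by fastforce+
    have hr: "r' = [] \<or> fst (hd r') \<noteq> e" using r q by (cases r') auto
    have rr: "red md r'" using red_tl r q by blast
    have rc: "evF r' \<in> carrier W" using evF_carr rr by blast
    have "xe e [^]\<^bsub>W\<^esub> k \<otimes>\<^bsub>W\<^esub> evF q = xe e [^]\<^bsub>W\<^esub> (k + x) \<otimes>\<^bsub>W\<^esub> evF r'"
      using q xc rc by (simp add: evL_def G.m_assoc[symmetric] G.nat_pow_mult)
    also have "\<dots> = xe e [^]\<^bsub>W\<^esub> ((k + x) mod md e) \<otimes>\<^bsub>W\<^esub> evF r'"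
      using xe_mod[OF e] by metis
    finally have eq: "xe e [^]\<^bsub>W\<^esub> k \<otimes>\<^bsub>W\<^esub> evF q = xe e [^]\<^bsub>W\<^esub> ((k + x) mod md e) \<otimes>\<^bsub>W\<^esub> evF r'" .
    show ?thesis using eq Lm_same[where x=x and md=md and e=e and r=r' and k=k, OF hx hr] q rc by (simp add: evL_def)
  next
    case False
    then have hq: "q = [] \<or> fst (hd q) \<noteq> e" by auto
    have qc: "evF q \<in> carrier W" using evF_carr r by blast
    have "xe e [^]\<^bsub>W\<^esub> k = xe e [^]\<^bsub>W\<^esub> (k mod md e)" using xe_mod[OF e] by blast
    then show ?thesis using Lm_other[OF hq, of md k] qc by (simp add: evL_def)
  qed
qed

lemma evF_Aact_aux: "\<forall>i q. i < n \<longrightarrow> dep i = d \<longrightarrow> red md q \<longrightarrow>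
   evF (Aact i q) = w 0 \<otimes>\<^bsub>W\<^esub> w i \<otimes>\<^bsub>W\<^esub> evF q"
proof (induction d)
  case 0
  show ?case
  proof (intro allI impI)
    fix i q assume a: "i < n" "dep i = 0" "red md q"
    then have "i = 0" using dep_zero_iff by blast
    then show "evF (Aact i q) = w 0 \<otimes>\<^bsub>W\<^esub> w i \<otimes>\<^bsub>W\<^esub> evF q"
      using w_sq npos evF_carr a by (simp add: Aact_def pth0)
  qed
next
  case (Suc d)
  show ?case
  proof (intro allI impI)
    fix i q assume a: "i < n" "dep i = Suc d" "red md q"
    have i0: "i \<noteq> 0"
    proof
      assume "i = 0" then show False using a dep0 by simp
    qed
    have p: "par i < n" "dep (par i) = d" using par_lt[OF a(1) i0] par_dep[OF a(1) i0] a(2) by auto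
    have r1: "red md (Lm md i 1 q)" using Lm_red md_pos a by blast
    have qc: "evF q \<in> carrier W" using evF_carr a by blast
    have "evF (Aact i q) = w 0 \<otimes>\<^bsub>W\<^esub> w (par i) \<otimes>\<^bsub>W\<^esub> evF (Lm md i 1 q)"
      using Aact_par[OF a(1) i0] Suc.IH p r1 by simp
    also have "\<dots> = w 0 \<otimes>\<^bsub>W\<^esub> w (par i) \<otimes>\<^bsub>W\<^esub> (w (par i) \<otimes>\<^bsub>W\<^esub> w i \<otimes>\<^bsub>W\<^esub> evF q)"
      using evF_Lm[of i q 1] a i0 xe_carr by (simp add: xe_def)
    also have "\<dots> = w 0 \<otimes>\<^bsub>W\<^esub> (w (par i) \<otimes>\<^bsub>W\<^esub> w (par i)) \<otimes>\<^bsub>W\<^esub> w i \<otimes>\<^bsub>W\<^esub> evF q"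
      using w_carr p a npos qc by (simp add: G.m_assoc)
    also have "\<dots> = w 0 \<otimes>\<^bsub>W\<^esub> w i \<otimes>\<^bsub>W\<^esub> evF q"
      using w_sq p w_carr a npos by simp
    finally show "evF (Aact i q) = w 0 \<otimes>\<^bsub>W\<^esub> w i \<otimes>\<^bsub>W\<^esub> evF q" .
  qed
qed

lemma evF_Aact: "i < n \<Longrightarrow> red md q \<Longrightarrow> evF (Aact i q) = w 0 \<otimes>\<^bsub>W\<^esub> w i \<otimes>\<^bsub>W\<^esub> evF q"
  using evF_Aact_aux by blast

lemma xe_pred: assumes e: "0 < e" "e < n"
  shows "xe e [^]\<^bsub>W\<^esub> (md e - 1) = w e \<otimes>\<^bsub>W\<^esub> w (par e)"
proof -
  have xc: "xe e \<in> carrier W" using xe_carr e by blast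
  have p: "par e < n" using par_lt e by simp
  have m2: "Suc (md e - 1) = md e" using md_prop[OF e] by simp
  have "xe e [^]\<^bsub>W\<^esub> (md e - 1) \<otimes>\<^bsub>W\<^esub> xe e = \<one>\<^bsub>W\<^esub>"
    using xe_pow[OF e] m2 by (metis G.nat_pow_Suc)
  then have "xe e [^]\<^bsub>W\<^esub> (md e - 1) = inv\<^bsub>W\<^esub> (xe e)"
    using xc G.inv_equality[symmetric] by simp
  also have "\<dots> = w e \<otimes>\<^bsub>W\<^esub> w (par e)"
    using xe_def p e w_carr w_inv by (simp add: G.inv_mult_group)
  finally show ?thesis .
qed

lemma evF_Ainv_aux: "\<forall>i q. i < n \<longrightarrow> dep i = d \<longrightarrow> red md q \<longrightarrow>
   evF (Ainv i q) = w i \<otimes>\<^bsub>W\<^esub> w 0 \<otimes>\<^bsub>W\<^esub> evF q"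
proof (induction d)
  case 0
  show ?case
  proof (intro allI impI)
    fix i q assume a: "i < n" "dep i = 0" "red md q"
    then have "i = 0" using dep_zero_iff by blast
    then show "evF (Ainv i q) = w i \<otimes>\<^bsub>W\<^esub> w 0 \<otimes>\<^bsub>W\<^esub> evF q"
      using w_sq npos evF_carr a by (simp add: Ainv_def pth0)
  qed
next
  case (Suc d)
  show ?case
  proof (intro allI impI)
    fix i q assume a: "i < n" "dep i = Suc d" "red md q"
    have i0: "i \<noteq> 0"
    proof
      assume "i = 0" then show False using a dep0 by simp
    qed
    have p: "par i < n" "dep (par i) = d" using par_lt[OF a(1) i0] par_dep[OF a(1) i0] a(2) by auto
    have r1: "red md (Ainv (par i) q)" using Ainv_red a by blast
    have qc: "evF q \<in> carrier W" using evF_carr a by blast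
    have "evF (Ainv i q) = xe i [^]\<^bsub>W\<^esub> (md i - 1) \<otimes>\<^bsub>W\<^esub> evF (Ainv (par i) q)"
      using Ainv_par[OF a(1) i0] evF_Lm[OF _ a(1) r1] i0 by simp
    also have "\<dots> = w i \<otimes>\<^bsub>W\<^esub> w (par i) \<otimes>\<^bsub>W\<^esub> (w (par i) \<otimes>\<^bsub>W\<^esub> w 0 \<otimes>\<^bsub>W\<^esub> evF q)"
      using Suc.IH p a xe_pred[of i] i0 by simp
    also have "\<dots> = w i \<otimes>\<^bsub>W\<^esub> (w (par i) \<otimes>\<^bsub>W\<^esub> w (par i)) \<otimes>\<^bsub>W\<^esub> w 0 \<otimes>\<^bsub>W\<^esub> evF q"
      using w_carr p a npos qc by (simp add: G.m_assoc)
    also have "\<dots> = w i \<otimes>\<^bsub>W\<^esub> w 0 \<otimes>\<^bsub>W\<^esub> evF q"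
      using w_sq p w_carr a npos by simp
    finally show "evF (Ainv i q) = w i \<otimes>\<^bsub>W\<^esub> w 0 \<otimes>\<^bsub>W\<^esub> evF q" .
  qed
qed

lemma evF_Ainv: "i < n \<Longrightarrow> red md q \<Longrightarrow> evF (Ainv i q) = w i \<otimes>\<^bsub>W\<^esub> w 0 \<otimes>\<^bsub>W\<^esub> evF q"
  using evF_Ainv_aux by blast

lemma theta_gen: assumes i: "i < n" and v: "valid p"
  shows "theta (gen i p) = w i \<otimes>\<^bsub>W\<^esub> theta p"
proof -
  obtain q b where p: "p = (q,b)" by (cases p)
  have r: "red md q" using v p by (simp add: valid_def)
  have qc: "evF q \<in> carrier W" using evF_carr r by blast
  have w0: "w 0 \<in> carrier W" "w i \<in> carrier W" using w_carr npos i by auto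
  show ?thesis
  proof (cases b)
    case True
    then show ?thesis using p r evF_Ainv[OF i r] qc w0 by (simp add: gen_def theta_def G.m_assoc)
  next
    case False
    have "w 0 \<otimes>\<^bsub>W\<^esub> (w 0 \<otimes>\<^bsub>W\<^esub> w i \<otimes>\<^bsub>W\<^esub> evF q) = (w 0 \<otimes>\<^bsub>W\<^esub> w 0) \<otimes>\<^bsub>W\<^esub> w i \<otimes>\<^bsub>W\<^esub> evF q"
      using qc w0 by (simp add: G.m_assoc)
    also have "\<dots> = w i \<otimes>\<^bsub>W\<^esub> evF q" using w_sq npos qc w0 by simp
    finally show ?thesis using False p r evF_Aact[OF i r] by (simp add: gen_def theta_def)
  qed
qed

definition "base = ([] :: (nat \<times> nat) list, False)"

lemma base_valid: "valid base" by (simp add: valid_def base_def)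

lemma theta_act: "word_over n u \<Longrightarrow> theta (act u base) = ev u"
proof (induction u)
  case Nil then show ?case by (simp add: theta_def base_def)
next
  case (Cons l u)
  obtain i b where l: "l = (i,b)" by (cases l)
  have i: "i < n" and wu: "word_over n u" using Cons.prems l by (auto simp: word_over_def)
  have v: "valid (act u base)" using act_valid[OF base_valid] by blast
  have "theta (act (l#u) base) = w i \<otimes>\<^bsub>W\<^esub> ev u"
    using theta_gen[OF i v] Cons.IH[OF wu] l by simp
  then show ?case using l w_inv i by simp
qed

end



lemma (in group) subgroup_pow_closed: "subgroup H G \<Longrightarrow> x \<in> H \<Longrightarrow> x [^] (k::nat) \<in> H"
proof (induction k)
  case 0 then show ?case using subgroup.one_closed by simp
next
  case (Suc k)
  have "x [^] Suc k = x [^] k \<otimes> x" by simp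
  then show ?case using Suc subgroup.m_closed by metis
qed

context csys begin

abbreviation "Wd \<equiv> derived W (carrier W)"

lemma Wd_sub: "subgroup Wd W" by (rule G.derived_is_subgroup) simp

lemma Wd_carr: "x \<in> Wd \<Longrightarrow> x \<in> carrier W"
  using subgroup.subset[OF Wd_sub] by blast

lemma rel_len: "r \<in> Rel \<Longrightarrow> even (length r)"
proof -
  assume "r \<in> Rel"
  then obtain a b k where "r = concat (replicate k [(a,False),(b,False)])"
    unfolding coxeter_relators_def by blast
  moreover have "length (concat (replicate k [(a,False),(b::nat,False)])) = 2 * k"
    by (induction k) auto
  ultimately show ?thesis by simp
qed

lemma pres_len: "pres_eq n Rel u v \<Longrightarrow> even (length u) = even (length v)"
  by (induction rule: pres_eq.induct) (auto dest: rel_len)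

lemma invw_len[simp]: "length (invw u) = length u" by (simp add: invw_def)

lemma ev_par: assumes "word_over n u" "word_over n v" "ev u = ev v"
  shows "even (length u) = even (length v)"
proof -
  have "ev (u @ invw v) = ev u \<otimes>\<^bsub>W\<^esub> inv\<^bsub>W\<^esub> (ev v)"
    using assms ev_append invw_over ev_invw by simp
  also have "\<dots> = \<one>\<^bsub>W\<^esub>" using assms ev_carr by simp
  finally have "pres_eq n Rel (u @ invw v) []" using pres_ev assms invw_over by simp
  then have "even (length (u @ invw v))" using pres_len by fastforce
  then show ?thesis by simp
qed

definition "Ev = {x \<in> carrier W. \<exists>u. word_over n u \<and> ev u = x \<and> even (length u)}"

lemma Ev_sub: "subgroup Ev W"
proof (rule G.subgroupI)
  show "Ev \<subseteq> carrier W" using Ev_def by auto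
  show "Ev \<noteq> {}"
  proof -
    have "\<one>\<^bsub>W\<^esub> \<in> Ev" unfolding Ev_def by (auto intro!: exI[of _ "[]"] simp: word_over_def)
    then show ?thesis by blast
  qed
  show "inv\<^bsub>W\<^esub> a \<in> Ev" if ha: "a \<in> Ev" for a
  proof -
    obtain u where u: "word_over n u" "ev u = a" "even (length u)" using ha unfolding Ev_def by blast
    then show ?thesis unfolding Ev_def using ev_invw invw_over ev_carr
      by (auto intro!: exI[of _ "invw u"])
  qed
  show "a \<otimes>\<^bsub>W\<^esub> b \<in> Ev" if ha: "a \<in> Ev" and hb: "b \<in> Ev" for a b
  proof -
    obtain u where u: "word_over n u" "ev u = a" "even (length u)" using ha unfolding Ev_def by blast
    obtain v where v: "word_over n v" "ev v = b" "even (length v)" using hb unfolding Ev_def by blast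
    show ?thesis unfolding Ev_def using u v ev_append ev_carr
      by (auto intro!: exI[of _ "u @ v"])
  qed
qed

lemma Wd_Ev: "Wd \<subseteq> Ev"
  unfolding derived_def
proof (rule G.generate_subgroup_incl[OF _ Ev_sub])
  show "derived_set W (carrier W) \<subseteq> Ev"
  proof
    fix z assume "z \<in> derived_set W (carrier W)"
    then obtain x y where xy: "x \<in> carrier W" "y \<in> carrier W"
      "z = x \<otimes>\<^bsub>W\<^esub> y \<otimes>\<^bsub>W\<^esub> inv\<^bsub>W\<^esub> x \<otimes>\<^bsub>W\<^esub> inv\<^bsub>W\<^esub> y" by blast
    obtain u where u: "word_over n u" "ev u = x" using ev_word xy by blast
    obtain v where v: "word_over n v" "ev v = y" using ev_word xy by blast
    let ?t = "u @ v @ invw u @ invw v"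
    have wt: "word_over n ?t" using u v invw_over by simp
    have "ev ?t = x \<otimes>\<^bsub>W\<^esub> (y \<otimes>\<^bsub>W\<^esub> (inv\<^bsub>W\<^esub> x \<otimes>\<^bsub>W\<^esub> inv\<^bsub>W\<^esub> y))"
      using u v invw_over ev_append ev_invw by simp
    also have "\<dots> = z" using xy by (simp add: G.m_assoc)
    finally show "z \<in> Ev" unfolding Ev_def using wt xy by (auto intro!: exI[of _ ?t])
  qed
qed

lemma w0_notin: "w 0 \<notin> Wd"
proof
  assume "w 0 \<in> Wd"
  then have "w 0 \<in> Ev" using Wd_Ev by blast
  then obtain u where u: "word_over n u" "ev u = w 0" "even (length u)" using Ev_def by auto
  have "ev [(0,False)] = w 0" using w_carr npos by simp
  moreover have "word_over n [(0,False)]" using npos by (simp add: word_over_def)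
  ultimately have "even (length u) = even (length [(0::nat,False)])" using ev_par u by metis
  then show False using u by simp
qed

lemma xe_in: assumes odd: "odd_coxeter n m" and e: "0 < e" "e < n" shows "xe e \<in> Wd"
proof -
  have p: "par e < n" "par e \<noteq> e" using par_lt par_adj adj_lt e by auto
  have mk: "m (par e) e = enat (md e)" using md_prop e by blast
  have "odd (md e)" using odd p e mk unfolding odd_coxeter_def by fastforce
  then obtain j where j: "Suc (md e) = 2 * j" by (metis dvd_def even_Suc)
  have xc: "xe e \<in> carrier W" using xe_carr e by blast
  have wc: "w (par e) \<in> carrier W" "w e \<in> carrier W" using w_carr p e by auto
  have "w (par e) \<otimes>\<^bsub>W\<^esub> w e \<otimes>\<^bsub>W\<^esub> inv\<^bsub>W\<^esub> (w (par e)) \<otimes>\<^bsub>W\<^esub> inv\<^bsub>W\<^esub> (w e) \<in> derived_set W (carrier W)"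
    using wc by blast
  then have "w (par e) \<otimes>\<^bsub>W\<^esub> w e \<otimes>\<^bsub>W\<^esub> inv\<^bsub>W\<^esub> (w (par e)) \<otimes>\<^bsub>W\<^esub> inv\<^bsub>W\<^esub> (w e) \<in> Wd"
    unfolding derived_def by (rule generate.incl)
  moreover have "w (par e) \<otimes>\<^bsub>W\<^esub> w e \<otimes>\<^bsub>W\<^esub> inv\<^bsub>W\<^esub> (w (par e)) \<otimes>\<^bsub>W\<^esub> inv\<^bsub>W\<^esub> (w e) = xe e [^]\<^bsub>W\<^esub> (2::nat)"
    using wc w_inv p e xe_def by (simp add: G.m_assoc numeral_2_eq_2)
  ultimately have x2: "xe e [^]\<^bsub>W\<^esub> (2::nat) \<in> Wd" by simp
  have e1: "xe e [^]\<^bsub>W\<^esub> Suc (md e) = xe e" using xe_pow e xc by simp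
  have e2: "xe e [^]\<^bsub>W\<^esub> Suc (md e) = (xe e [^]\<^bsub>W\<^esub> (2::nat)) [^]\<^bsub>W\<^esub> j"
    using j xc G.nat_pow_pow by simp
  have "(xe e [^]\<^bsub>W\<^esub> (2::nat)) [^]\<^bsub>W\<^esub> j \<in> Wd" by (rule G.subgroup_pow_closed[OF Wd_sub x2])
  then show ?thesis using e1 e2 by metis
qed

lemma evF_in: assumes odd: "odd_coxeter n m" shows "red md q \<Longrightarrow> evF q \<in> Wd"
proof (induction q)
  case Nil then show ?case using Wd_sub subgroup.one_closed by simp
next
  case (Cons a q)
  have r: "0 < fst a \<and> fst a < n" using red_range Cons.prems by simp
  have "xe (fst a) \<in> Wd" using xe_in[OF odd] r by blast
  then have "xe (fst a) [^]\<^bsub>W\<^esub> (snd a) \<in> Wd" by (rule G.subgroup_pow_closed[OF Wd_sub])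
  then have "evL a \<in> Wd" by (simp add: evL_def)
  then show ?case using Cons red_tl Wd_sub subgroup.m_closed by fastforce
qed

lemma coset2: assumes odd: "odd_coxeter n m" and x: "x \<in> carrier W"
  shows "x \<in> Wd \<or> w 0 \<otimes>\<^bsub>W\<^esub> x \<in> Wd"
proof -
  obtain u where u: "word_over n u" "ev u = x" using ev_word x by blast
  obtain q b where p: "act u base = (q,b)" by (cases "act u base")
  have "valid (act u base)" using act_valid base_valid by blast
  then have r: "red md q" using p by (simp add: valid_def)
  have th: "theta (q,b) = x" using theta_act u p by metis
  have qin: "evF q \<in> Wd" using evF_in[OF odd r] .
  have qc: "evF q \<in> carrier W" using evF_carr r by blast
  show ?thesis
  proof (cases b)
    case True
    have "theta (q,True) = w 0 \<otimes>\<^bsub>W\<^esub> evF q" by (simp add: theta_def)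
    then have "x = w 0 \<otimes>\<^bsub>W\<^esub> evF q" using th True by simp
    then have "w 0 \<otimes>\<^bsub>W\<^esub> x = (w 0 \<otimes>\<^bsub>W\<^esub> w 0) \<otimes>\<^bsub>W\<^esub> evF q"
      using qc w_carr npos by (simp add: G.m_assoc)
    then show ?thesis using w_sq npos qc qin by simp
  next
    case False
    have "theta (q,False) = evF q" by (simp add: theta_def)
    then show ?thesis using th False qin by simp
  qed
qed

lemma act_left: "red md q' \<Longrightarrow> act u (q', False) = (Ml md (fst (act u base)) q', snd (act u base))"
proof (induction u)
  case Nil then show ?case by (simp add: base_def)
next
  case (Cons l u)
  obtain f b where fb: "act u base = (f,b)" by (cases "act u base")
  have IH: "act u (q', False) = (Ml md f q', b)" using Cons fb by simp
  show ?case
    using IH fb Ml_Ml[OF md_pos Cons.prems]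
    by (simp add: gen_def Aact_def Ainv_def)
qed

end



context csys begin

lemma center_trivial:
  assumes odd: "odd_coxeter n m" and n3: "3 \<le> n" and c: "c \<in> Wd"
    and comm: "\<And>i. i \<in> {1,2} \<Longrightarrow> c \<otimes>\<^bsub>W\<^esub> xe i = xe i \<otimes>\<^bsub>W\<^esub> c"
  shows "c = \<one>\<^bsub>W\<^esub>"
proof -
  have cc: "c \<in> carrier W" using Wd_carr c by blast
  obtain uc where uc: "word_over n uc" "ev uc = c" using ev_word cc by blast
  obtain q b where qb: "act uc base = (q,b)" by (cases "act uc base")
  have "valid (act uc base)" using act_valid base_valid by blast
  then have r: "red md q" using qb by (simp add: valid_def)
  have th: "theta (q,b) = c" using theta_act uc qb by metis
  have qc: "evF q \<in> carrier W" using evF_carr r by blast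
  have qin: "evF q \<in> Wd" using evF_in[OF odd r] .
  have bF: "\<not> b"
  proof
    assume b
    have "theta (q,True) = w 0 \<otimes>\<^bsub>W\<^esub> evF q" by (simp add: theta_def)
    then have ce: "c = w 0 \<otimes>\<^bsub>W\<^esub> evF q" using th \<open>b\<close> by simp
    have w0c: "w 0 \<in> carrier W" using w_carr npos by blast
    have "c \<otimes>\<^bsub>W\<^esub> inv\<^bsub>W\<^esub> (evF q) = w 0"
      using ce qc w0c by (simp add: G.m_assoc)
    moreover have "c \<otimes>\<^bsub>W\<^esub> inv\<^bsub>W\<^esub> (evF q) \<in> Wd"
      by (rule subgroup.m_closed[OF Wd_sub c subgroup.m_inv_closed[OF Wd_sub qin]])
    ultimately show False using w0_notin by simp
  qed
  have ce: "c = evF q"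
  proof -
    have "theta (q,False) = evF q" by (simp add: theta_def)
    then show ?thesis using th bF by simp
  qed
  have key: "q = [] \<or> fst (hd q) = i" if hi: "i \<in> {1,2}" for i
  proof -
    have i: "0 < i" "i < n" using hi n3 by auto
    have p: "par i < n" using par_lt i by simp
    have m2: "2 \<le> md i" using md_prop i by blast
    let ?ui = "[(par i,False),(i,False)]"
    have wui: "word_over n ?ui" using p i by (simp add: word_over_def)
    have evui: "ev ?ui = xe i" using w_carr p i by (simp add: xe_def)
    have e1: "ev (uc @ ?ui) = c \<otimes>\<^bsub>W\<^esub> xe i" by (simp only: ev_append[OF uc(1) wui] evui uc(2))
    have e2: "ev (?ui @ uc) = xe i \<otimes>\<^bsub>W\<^esub> c" by (simp only: ev_append[OF wui uc(1)] evui uc(2))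
    have "ev (uc @ ?ui) = ev (?ui @ uc)" using e1 e2 comm[OF hi] by metis
    moreover have "word_over n (uc @ ?ui)" "word_over n (?ui @ uc)" using wui uc(1) word_over_append by blast+
    ultimately have aeq: "act (uc @ ?ui) base = act (?ui @ uc) base"
      using act_wd base_valid by blast
    have L1: "Lm md i 1 [] = [(i,1)]" using m2 by (simp add: Lm_def)
    have r1: "red md [(i,1)]" using m2 by simp
    have "act ?ui base = ([(i,1)], False)"
      using Aact_par[of i "[]"] i L1 Ainv_Aact[OF r1] by (simp add: gen_def base_def)
    then have lhs: "act (uc @ ?ui) base = (Ml md q [(i,1)], False)"
      using act_left[OF r1, of uc] qb bF by (simp add: act_append)
    have rl: "red md (Lm md i 1 q)" using Lm_red md_pos r by blast
    have "act (?ui @ uc) base = (Lm md i 1 q, False)"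
      using qb bF Aact_par[of i q] i Ainv_Aact[OF rl] by (simp add: act_append gen_def)
    then have "Ml md q [(i,1)] = Lm md i 1 q" using lhs aeq by simp
    then show ?thesis using fp_comm[OF md_pos r] m2 by simp
  qed
  have "q = []"
  proof (rule ccontr)
    assume "q \<noteq> []"
    then have "fst (hd q) = 1" "fst (hd q) = 2" using key by auto
    then show False by simp
  qed
  then show ?thesis using ce by simp
qed

end



context csys begin

lemma invol_cancel: "a \<in> carrier W \<Longrightarrow> a \<otimes>\<^bsub>W\<^esub> a = \<one>\<^bsub>W\<^esub> \<Longrightarrow> y \<in> carrier W \<Longrightarrow> a \<otimes>\<^bsub>W\<^esub> (a \<otimes>\<^bsub>W\<^esub> y) = y"
  by (simp add: G.m_assoc[symmetric])

lemma invol_inv: "a \<in> carrier W \<Longrightarrow> a \<otimes>\<^bsub>W\<^esub> a = \<one>\<^bsub>W\<^esub> \<Longrightarrow> inv\<^bsub>W\<^esub> a = a"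
  using G.inv_equality by blast

lemma iso_facts: assumes odd: "odd_coxeter n m" and f: "f \<in> iso W W"
  shows "f (w 0) \<notin> Wd \<and> w 0 \<otimes>\<^bsub>W\<^esub> f (w 0) \<in> Wd \<and> f (w 0) \<otimes>\<^bsub>W\<^esub> f (w 0) = \<one>\<^bsub>W\<^esub>
         \<and> f (w 0) \<in> carrier W \<and> group_hom W W f \<and> f ` carrier W = carrier W \<and> (\<forall>x\<in>Wd. f x \<in> Wd)"
proof -
  have hf: "f \<in> hom W W" and bf: "bij_betw f (carrier W) (carrier W)" using f iso_def by auto
  have gf: "group_hom W W f" unfolding group_hom_def group_hom_axioms_def using hf by simp
  have sc: "w 0 \<in> carrier W" using w_carr npos by blast
  have im: "f ` carrier W = carrier W" using bf bij_betw_imp_surj_on by blast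
  have "derived W (f ` carrier W) = f ` Wd" using group_hom.derived_img[OF gf] by simp
  then have dim: "f ` Wd = Wd" using im by simp
  have fWd: "\<forall>x\<in>Wd. f x \<in> Wd" using dim by blast
  have fsc: "f (w 0) \<in> carrier W" using group_hom.hom_closed[OF gf sc] .
  have ss: "f (w 0) \<otimes>\<^bsub>W\<^esub> f (w 0) = \<one>\<^bsub>W\<^esub>"
    using group_hom.hom_mult[OF gf sc sc, symmetric] w_sq npos group_hom.hom_one[OF gf] by simp
  have notin: "f (w 0) \<notin> Wd"
  proof
    assume fin: "f (w 0) \<in> Wd"
    obtain y where y: "y \<in> carrier W" "f y = w 0" using im sc by (metis imageE)
    have "f y \<in> Wd"
    proof (cases "y \<in> Wd")
      case True then show ?thesis using fWd by blast
    next
      case False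
      then have "w 0 \<otimes>\<^bsub>W\<^esub> y \<in> Wd" using coset2[OF odd y(1)] by blast
      then have a: "f (w 0) \<otimes>\<^bsub>W\<^esub> f y \<in> Wd"
        using fWd group_hom.hom_mult[OF gf sc y(1)] by metis
      have fyc: "f y \<in> carrier W" using group_hom.hom_closed[OF gf y(1)] .
      have "inv\<^bsub>W\<^esub> (f (w 0)) \<otimes>\<^bsub>W\<^esub> (f (w 0) \<otimes>\<^bsub>W\<^esub> f y) \<in> Wd"
        by (rule subgroup.m_closed[OF Wd_sub subgroup.m_inv_closed[OF Wd_sub fin] a])
      then show ?thesis using fsc fyc by (simp add: G.m_assoc[symmetric])
    qed
    then show False using y w0_notin by simp
  qed
  then have "w 0 \<otimes>\<^bsub>W\<^esub> f (w 0) \<in> Wd" using coset2[OF odd fsc] by blast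
  then show ?thesis using notin ss fsc gf im fWd by blast
qed

lemma main_restr: assumes odd: "odd_coxeter n m" and n3: "3 \<le> n"
  shows "\<forall>\<phi> \<in> iso W W. \<forall>\<psi> \<in> iso W W.
           (\<forall>x \<in> derived W (carrier W). \<phi> x = \<psi> x) \<longrightarrow>
           (\<forall>x \<in> carrier W. \<phi> x = \<psi> x)"
proof (intro ballI impI)
  fix \<phi> \<psi> x
  assume \<phi>: "\<phi> \<in> iso W W" and \<psi>: "\<psi> \<in> iso W W" and agree: "\<forall>x\<in>Wd. \<phi> x = \<psi> x"
    and x: "x \<in> carrier W"
  define s where "s = w 0"
  have sc: "s \<in> carrier W" using w_carr npos s_def by blast
  have ss: "s \<otimes>\<^bsub>W\<^esub> s = \<one>\<^bsub>W\<^esub>" using w_sq npos s_def by blast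
  note F1 = iso_facts[OF odd \<phi>, folded s_def]
  note F2 = iso_facts[OF odd \<psi>, folded s_def]
  have pn: "\<phi> s \<notin> Wd" and ps: "s \<otimes>\<^bsub>W\<^esub> \<phi> s \<in> Wd" and pss: "\<phi> s \<otimes>\<^bsub>W\<^esub> \<phi> s = \<one>\<^bsub>W\<^esub>"
    and pc: "\<phi> s \<in> carrier W" and gp: "group_hom W W \<phi>" and imp: "\<phi> ` carrier W = carrier W"
    and pWd: "\<forall>x\<in>Wd. \<phi> x \<in> Wd" using F1 by auto
  have qs: "s \<otimes>\<^bsub>W\<^esub> \<psi> s \<in> Wd" and qss: "\<psi> s \<otimes>\<^bsub>W\<^esub> \<psi> s = \<one>\<^bsub>W\<^esub>"
    and qc: "\<psi> s \<in> carrier W" and gq: "group_hom W W \<psi>" using F2 by auto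
  define c where "c = \<psi> s \<otimes>\<^bsub>W\<^esub> \<phi> s"
  have cc: "c \<in> carrier W" using c_def pc qc by simp
  have "inv\<^bsub>W\<^esub> (s \<otimes>\<^bsub>W\<^esub> \<psi> s) \<otimes>\<^bsub>W\<^esub> (s \<otimes>\<^bsub>W\<^esub> \<phi> s) = c"
  proof -
    have "inv\<^bsub>W\<^esub> (s \<otimes>\<^bsub>W\<^esub> \<psi> s) = \<psi> s \<otimes>\<^bsub>W\<^esub> s"
      using G.inv_mult_group[OF sc qc] invol_inv[OF sc ss] invol_inv[OF qc qss] by simp
    then show ?thesis using c_def invol_cancel[OF sc ss pc] sc qc pc by (simp add: G.m_assoc)
  qed
  moreover have "inv\<^bsub>W\<^esub> (s \<otimes>\<^bsub>W\<^esub> \<psi> s) \<otimes>\<^bsub>W\<^esub> (s \<otimes>\<^bsub>W\<^esub> \<phi> s) \<in> Wd"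
    by (rule subgroup.m_closed[OF Wd_sub subgroup.m_inv_closed[OF Wd_sub qs] ps])
  ultimately have cin: "c \<in> Wd" by simp
  have comm: "c \<otimes>\<^bsub>W\<^esub> xe i = xe i \<otimes>\<^bsub>W\<^esub> c" if hi: "i \<in> {1,2}" for i
  proof -
    have i: "0 < i" "i < n" using hi n3 by auto
    define u where "u = xe i"
    have uin: "u \<in> Wd" using xe_in[OF odd i] u_def by simp
    have uc: "u \<in> carrier W" using Wd_carr uin by blast
    obtain g where g: "g \<in> carrier W" "\<phi> g = u" using imp uc by (metis imageE)
    have gin: "g \<in> Wd"
    proof (rule ccontr)
      assume "g \<notin> Wd"
      then have "s \<otimes>\<^bsub>W\<^esub> g \<in> Wd" using coset2[OF odd g(1)] s_def by blast
      then have a: "\<phi> s \<otimes>\<^bsub>W\<^esub> u \<in> Wd" using pWd group_hom.hom_mult[OF gp sc g(1)] g(2) by metis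
      have "(\<phi> s \<otimes>\<^bsub>W\<^esub> u) \<otimes>\<^bsub>W\<^esub> inv\<^bsub>W\<^esub> u \<in> Wd"
        by (rule subgroup.m_closed[OF Wd_sub a subgroup.m_inv_closed[OF Wd_sub uin]])
      then have "\<phi> s \<in> Wd" using pc uc by (simp add: G.m_assoc)
      then show False using pn by simp
    qed
    have nrm: "Wd \<lhd> W" by (rule G.derived_self_is_normal)
    have "s \<otimes>\<^bsub>W\<^esub> g \<otimes>\<^bsub>W\<^esub> inv\<^bsub>W\<^esub> s \<in> Wd" by (rule normal.inv_op_closed2[OF nrm sc gin])
    then have hin: "s \<otimes>\<^bsub>W\<^esub> g \<otimes>\<^bsub>W\<^esub> s \<in> Wd" using invol_inv[OF sc ss] by simp
    have "\<phi> (s \<otimes>\<^bsub>W\<^esub> g \<otimes>\<^bsub>W\<^esub> s) = \<phi> s \<otimes>\<^bsub>W\<^esub> u \<otimes>\<^bsub>W\<^esub> \<phi> s"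
      using group_hom.hom_mult[OF gp] sc g by simp
    moreover have "\<psi> (s \<otimes>\<^bsub>W\<^esub> g \<otimes>\<^bsub>W\<^esub> s) = \<psi> s \<otimes>\<^bsub>W\<^esub> u \<otimes>\<^bsub>W\<^esub> \<psi> s"
      using group_hom.hom_mult[OF gq] sc g agree gin by simp
    ultimately have eq: "\<phi> s \<otimes>\<^bsub>W\<^esub> u \<otimes>\<^bsub>W\<^esub> \<phi> s = \<psi> s \<otimes>\<^bsub>W\<^esub> u \<otimes>\<^bsub>W\<^esub> \<psi> s"
      using agree hin by metis
    have "c \<otimes>\<^bsub>W\<^esub> u = \<psi> s \<otimes>\<^bsub>W\<^esub> (\<phi> s \<otimes>\<^bsub>W\<^esub> u \<otimes>\<^bsub>W\<^esub> \<phi> s) \<otimes>\<^bsub>W\<^esub> \<phi> s"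
      using c_def pc qc uc invol_cancel[OF pc pss] pss by (simp add: G.m_assoc)
    also have "\<dots> = \<psi> s \<otimes>\<^bsub>W\<^esub> (\<psi> s \<otimes>\<^bsub>W\<^esub> u \<otimes>\<^bsub>W\<^esub> \<psi> s) \<otimes>\<^bsub>W\<^esub> \<phi> s" using eq by simp
    also have "\<dots> = u \<otimes>\<^bsub>W\<^esub> c"
      using c_def pc qc uc invol_cancel[OF qc qss] qss by (simp add: G.m_assoc)
    finally show ?thesis using u_def by simp
  qed
  have "c = \<one>\<^bsub>W\<^esub>" using center_trivial[OF odd n3 cin comm] by blast
  then have "\<psi> s \<otimes>\<^bsub>W\<^esub> \<phi> s = \<one>\<^bsub>W\<^esub>" using c_def by simp
  then have "inv\<^bsub>W\<^esub> (\<phi> s) = \<psi> s" using G.inv_equality pc qc by blast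
  then have phps: "\<phi> s = \<psi> s" using invol_inv[OF pc pss] by simp
  show "\<phi> x = \<psi> x"
  proof (cases "x \<in> Wd")
    case True then show ?thesis using agree by blast
  next
    case False
    then have d: "s \<otimes>\<^bsub>W\<^esub> x \<in> Wd" using coset2[OF odd x] s_def by blast
    have xe: "x = s \<otimes>\<^bsub>W\<^esub> (s \<otimes>\<^bsub>W\<^esub> x)" using invol_cancel[OF sc ss x] by simp
    have dc: "s \<otimes>\<^bsub>W\<^esub> x \<in> carrier W" using sc x by simp
    have "\<phi> x = \<phi> s \<otimes>\<^bsub>W\<^esub> \<phi> (s \<otimes>\<^bsub>W\<^esub> x)" using group_hom.hom_mult[OF gp sc dc] xe by metis
    also have "\<dots> = \<psi> s \<otimes>\<^bsub>W\<^esub> \<psi> (s \<otimes>\<^bsub>W\<^esub> x)" using phps agree d by simp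
    also have "\<dots> = \<psi> x" using group_hom.hom_mult[OF gq sc dc] xe by metis
    finally show ?thesis .
  qed
qed

end

theorem proposition2p9:
  fixes W :: "('g, 'b) monoid_scheme" and n :: nat and w :: "nat \<Rightarrow> 'g"
    and m :: "nat \<Rightarrow> nat \<Rightarrow> enat"
  assumes "coxeter_system W n w m"
    and "odd_coxeter n m"
    and "n \<ge> 3"
    and "graph_connected n (cox_adj n m)"
    and "graph_is_tree n (cox_adj n m)"
  shows "\<forall>\<phi> \<in> iso W W. \<forall>\<psi> \<in> iso W W.
           (\<forall>x \<in> derived W (carrier W). \<phi> x = \<psi> x) \<longrightarrow>
           (\<forall>x \<in> carrier W. \<phi> x = \<psi> x)"
proof -
  have cm: "coxeter_matrix n m" and pr: "has_presentation W n w (coxeter_relators n m)"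
    using assms(1) unfolding coxeter_system_def by auto
  have grp: "group W" using pr unfolding has_presentation_def by blast
  have "csys n m W w"
    unfolding csys_def csys_axioms_def cox_tree_def
    using cm assms(3,4,5) grp pr by (auto simp: graph_is_tree_def)
  then interpret csys n m W w .
  show ?thesis using main_restr[OF assms(2) assms(3)] .
qed


end
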